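(* There is a deterministic algorithm for the Locate problem that runs in $k$ rounds and asks at most $k\,n^{1/k}$ rank queries on every input of length $n$.
   Context: Locate problem in the rank query model: there is a vector $\vec{x}=(x_1,\ldots,x_n)$ whose ranks form an unknown permutation of $\{1,\ldots,n\}$; an index $i$ is given and the goal is to determine $\mathrm{rank}(x_i)$. Queries have the form "How is $\mathrm{rank}(x_j)$ compared to $m$?" ($j,m\in\{1,\ldots,n\}$), with answer "$<$", "$=$" or "$>$". An algorithm runs in $k$ rounds if in each of $k$ rounds it submits a set of queries chosen depending only on answers of earlier rounds, then receives all their answers. *)

theory Defs
  imports Complex_Main
begin

text \<open>Rank query model. The ranks of x_1..x_n are given by a permutation
  rk of {1..n}: rk j = rank(x_j). A query (j,m) asks how rank(x_j) compares to m.\<close>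

datatype answer = Ans_Less | Ans_Equal | Ans_Greater

type_synonym query = "nat \<times> nat"

definition ans :: "(nat \<Rightarrow> nat) \<Rightarrow> query \<Rightarrow> answer" where
  "ans rk q = (if rk (fst q) < snd q then Ans_Less
               else if rk (fst q) = snd q then Ans_Equal else Ans_Greater)"

type_synonym transcript = "(query \<times> answer) set list"

type_synonym strategy = "transcript \<Rightarrow> query set"

fun run :: "strategy \<Rightarrow> (nat \<Rightarrow> nat) \<Rightarrow> nat \<Rightarrow> transcript" where
  "run S rk 0 = []"
| "run S rk (Suc r) = (let h = run S rk r in h @ [(\<lambda>q. (q, ans rk q)) ` S h])"

definition num_queries :: "strategy \<Rightarrow> (nat \<Rightarrow> nat) \<Rightarrow> nat \<Rightarrow> nat" where
  "num_queries S rk k = (\<Sum>r<k. card (S (run S rk r)))"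

definition valid_strategy :: "nat \<Rightarrow> strategy \<Rightarrow> bool" where
  "valid_strategy n S = (\<forall>h. S h \<subseteq> {1..n} \<times> {1..n})"

definition locate_alg :: "nat \<Rightarrow> nat \<Rightarrow> nat \<Rightarrow> real \<Rightarrow> strategy \<Rightarrow> (transcript \<Rightarrow> nat) \<Rightarrow> bool" where
  "locate_alg n i k B S out =
     (valid_strategy n S \<and>
      (\<forall>rk. bij_betw rk {1..n} {1..n} \<longrightarrow>
          out (run S rk k) = rk i \<and> real (num_queries S rk k) \<le> B))"

end

theory Submission
  imports Defs
begin

definition cnt :: "nat \<Rightarrow> (query \<times> answer) set \<Rightarrow> nat" where
  "cnt i R = card {m. \<exists>a. ((i,m),a) \<in> R \<and> a \<noteq> Ans_Less}"

fun Lr :: "nat \<Rightarrow> nat \<Rightarrow> nat \<Rightarrow> transcript \<Rightarrow> nat \<Rightarrow> nat" where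
  "Lr i k b h 0 = 1"
| "Lr i k b h (Suc r) = Lr i k b h r + b ^ (k - Suc r) * cnt i (h ! r)"

definition qset :: "nat \<Rightarrow> nat \<Rightarrow> nat \<Rightarrow> nat \<Rightarrow> nat \<Rightarrow> query set" where
  "qset n i b lo d = (\<lambda>t. (i, lo + t*d)) ` {t \<in> {1..b-1}. lo + t*d \<le> n}"

definition strat :: "nat \<Rightarrow> nat \<Rightarrow> nat \<Rightarrow> nat \<Rightarrow> strategy" where
  "strat n i k b h = qset n i b (Lr i k b h (length h)) (b ^ (k - Suc (length h)))"

lemma length_run[simp]: "length (run S rk r) = r"
  by (induction r) (auto simp: Let_def)

lemma Lr_append: "r \<le> length h \<Longrightarrow> Lr i k b (h @ [R]) r = Lr i k b h r"
  by (induction r) (auto simp: nth_append)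

lemma card_qset: "card (qset n i b lo d) \<le> b - 1"
proof -
  have "card (qset n i b lo d) \<le> card {t \<in> {1..b-1}. lo + t*d \<le> n}"
    unfolding qset_def by (rule card_image_le) simp
  also have "\<dots> \<le> card {1..b-1}" by (rule card_mono) auto
  finally show ?thesis by simp
qed

lemma qset_valid: "i \<in> {1..n} \<Longrightarrow> d \<ge> 1 \<Longrightarrow> qset n i b lo d \<subseteq> {1..n} \<times> {1..n}"
  unfolding qset_def by (auto simp: Suc_le_eq)

lemma div_identity:
  fixes q b d :: nat
  shows "(q div (b*d)) * (b*d) + d * ((q mod (b*d)) div d) = d * (q div d)"
proof -
  have "q mod (b*d) = d * ((q div d) mod b) + q mod d"
    by (metis mod_mult2_eq mult.commute)
  then have "(q mod (b*d)) div d = (q div d) mod b"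
    by (cases "d = 0") auto
  moreover have "q div (b*d) = q div d div b"
    by (metis div_mult2_eq mult.commute)
  ultimately show ?thesis
    by (metis add.commute div_mult_mod_eq mult.assoc mult.commute distrib_left)
qed

lemma image_pair_lemma:
  "{m. (i,m) \<in> (\<lambda>t. (i, g t)) ` A \<and> P m} = g ` {t. t \<in> A \<and> P (g t)}"
  by auto

lemma cnt_eq:
  assumes "rk i = q + 1" "q + 1 \<le> n" "d \<ge> 1" "lo = 1 + (q div (b*d)) * (b*d)" "b \<ge> 1"
  shows "cnt i ((\<lambda>x. (x, ans rk x)) ` qset n i b lo d) = (q mod (b*d)) div d"
proof -
  have "{m. \<exists>a. ((i,m),a) \<in> (\<lambda>x. (x, ans rk x)) ` qset n i b lo d \<and> a \<noteq> Ans_Less}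
      = (\<lambda>t. lo + t*d) ` {t. 1 \<le> t \<and> t \<le> b - 1 \<and> lo + t*d \<le> n \<and> \<not> rk i < lo + t*d}"
  proof -
    have "{m. \<exists>a. ((i,m),a) \<in> (\<lambda>x. (x, ans rk x)) ` qset n i b lo d \<and> a \<noteq> Ans_Less}
        = {m. (i,m) \<in> qset n i b lo d \<and> \<not> rk i < m}"
      by (auto simp: ans_def split: if_splits)
    also have "\<dots> = (\<lambda>t. lo + t*d) ` {t. 1 \<le> t \<and> t \<le> b - 1 \<and> lo + t*d \<le> n \<and> \<not> rk i < lo + t*d}"
      unfolding qset_def image_pair_lemma by (simp add: conj_assoc)
    finally show ?thesis .
  qed
  also have "{t. 1 \<le> t \<and> t \<le> b - 1 \<and> lo + t*d \<le> n \<and> \<not> rk i < lo + t*d}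
      = {1..(q mod (b*d)) div d}"
  proof -
    have lt: "(q mod (b*d)) div d \<le> b - 1"
    proof -
      have "q mod (b*d) < b*d" using assms by simp
      then have "(q mod (b*d)) div d < b" using assms
        by (simp add: div_less_iff_less_mult)
      then show ?thesis by simp
    qed
    have qe: "q = (q div (b*d)) * (b*d) + q mod (b*d)" by (rule div_mult_mod_eq[symmetric])
    have "\<And>t. (lo + t*d \<le> q + 1) = (t \<le> (q mod (b*d)) div d)"
    proof -
      fix t
      have "(lo + t*d \<le> q + 1) = (t*d \<le> q mod (b*d))"
        using assms(4) qe by linarith
      also have "\<dots> = (t \<le> (q mod (b*d)) div d)"
        using assms(3) by (simp add: less_eq_div_iff_mult_less_eq)
      finally show "(lo + t*d \<le> q + 1) = (t \<le> (q mod (b*d)) div d)" .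
    qed
    note key = this
    show ?thesis
    proof (rule set_eqI)
      fix t
      show "t \<in> {t. 1 \<le> t \<and> t \<le> b - 1 \<and> lo + t*d \<le> n \<and> \<not> rk i < lo + t*d}
          \<longleftrightarrow> t \<in> {1..(q mod (b*d)) div d}"
        using key[of t] lt assms(1,2) unfolding mem_Collect_eq atLeastAtMost_iff not_less
        by linarith
    qed
  qed
  finally show ?thesis unfolding cnt_def
    using assms(3) by (simp add: card_image inj_on_def)
qed

lemma invariant:
  assumes b: "b \<ge> 1" and nb: "n \<le> b ^ k" and rki: "rk i = q + 1" "q + 1 \<le> n"
  shows "r \<le> k \<Longrightarrow> Lr i k b (run (strat n i k b) rk r) r = 1 + (q div b^(k-r)) * b^(k-r)"
proof (induction r)
  case 0
  have "q < b ^ k" using nb rki by linarith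
  then show ?case by simp
next
  case (Suc r)
  define h where "h = run (strat n i k b) rk r"
  define d where "d = b ^ (k - Suc r)"
  define R where "R = (\<lambda>x. (x, ans rk x)) ` strat n i k b h"
  have IH: "Lr i k b h r = 1 + (q div b^(k-r)) * b^(k-r)" using Suc unfolding h_def by simp
  have bd: "b^(k-r) = b * d" unfolding d_def using Suc.prems
    by (metis Suc_diff_le Suc_le_mono diff_Suc_Suc power_Suc le_SucI Suc_le_lessD less_imp_le_nat)
  have d1: "d \<ge> 1" unfolding d_def using b by simp
  have "run (strat n i k b) rk (Suc r) = h @ [R]" unfolding h_def R_def by (simp add: Let_def)
  moreover have "(h @ [R]) ! r = R" by (simp add: h_def nth_append)
  moreover have "Lr i k b (h @ [R]) r = Lr i k b h r" by (rule Lr_append) (simp add: h_def)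
  ultimately have "Lr i k b (run (strat n i k b) rk (Suc r)) (Suc r) = Lr i k b h r + d * cnt i R"
    by (simp only: Lr.simps d_def)
  also have "R = (\<lambda>x. (x, ans rk x)) ` qset n i b (1 + (q div (b*d)) * (b*d)) d"
    unfolding R_def strat_def using IH bd by (simp add: h_def d_def)
  also have "cnt i \<dots> = (q mod (b*d)) div d"
    by (rule cnt_eq[of rk i q n d _ b]) (use rki d1 b in auto)
  finally have "Lr i k b (run (strat n i k b) rk (Suc r)) (Suc r)
     = 1 + ((q div (b*d)) * (b*d) + d * ((q mod (b*d)) div d))" using IH bd by simp
  also have "\<dots> = 1 + (q div d) * d" using div_identity[of q b d] by (simp add: mult.commute)
  finally show ?case unfolding d_def .
qed

lemma b_exists:
  fixes k n :: nat
  assumes "k \<ge> 1" "n \<ge> 1"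
  shows "\<exists>b::nat. b \<ge> 1 \<and> n \<le> b ^ k \<and> real (b - 1) \<le> real n powr (1 / real k)"
proof -
  define x where "x = real n powr (1 / real k)"
  have xpos: "x > 0" unfolding x_def using assms by simp
  define b where "b = nat \<lceil>x\<rceil>"
  have bx: "real b \<ge> x" unfolding b_def using xpos by linarith
  have b1: "b \<ge> 1" unfolding b_def using xpos by linarith
  have "x ^ k = real n" unfolding x_def using assms
    by (simp add: powr_realpow[symmetric] powr_powr)
  moreover have "x ^ k \<le> real b ^ k" using bx xpos by (simp add: power_mono)
  ultimately have "real n \<le> real (b ^ k)" by simp
  then have "n \<le> b ^ k" by linarith
  moreover have "real (b - 1) \<le> x" unfolding b_def using xpos b1 b_def
    by (simp add: of_nat_diff)
  ultimately show ?thesis using b1 unfolding x_def by blast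
qed

theorem proposition1:
  fixes k n i :: nat
  assumes "k \<ge> 1" and "i \<in> {1..n}"
  shows "\<exists>S out. locate_alg n i k (real k * real n powr (1 / real k)) S out"
proof -
  have n1: "n \<ge> 1" using assms by simp
  obtain b :: nat where b1: "b \<ge> 1" and nb: "n \<le> b ^ k"
    and bx: "real (b - 1) \<le> real n powr (1 / real k)"
    using b_exists[OF assms(1) n1] by blast
  define S where "S = strat n i k b"
  define out where "out = (\<lambda>h. Lr i k b h (length h))"
  have valid: "valid_strategy n S"
    unfolding valid_strategy_def S_def strat_def
    using qset_valid assms(2) b1 by simp
  have main: "out (run S rk k) = rk i \<and> real (num_queries S rk k) \<le> real k * real n powr (1 / real k)"
    if bij: "bij_betw rk {1..n} {1..n}" for rk
  proof
    have "rk i \<in> {1..n}" using bij assms(2) by (meson bij_betwE)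
    then obtain q where q: "rk i = q + 1" "q + 1 \<le> n"
      by (metis Suc_eq_plus1 atLeastAtMost_iff not0_implies_Suc not_one_le_zero)
    show "out (run S rk k) = rk i"
      using invariant[of b n k rk i q k] b1 nb q unfolding out_def S_def by simp
    have "num_queries S rk k \<le> k * (b - 1)"
      unfolding num_queries_def S_def
      using sum_bounded_above[of "{..<k}" "\<lambda>r. card (strat n i k b (run (strat n i k b) rk r))" "b - 1"]
        card_qset unfolding strat_def by simp
    then have "real (num_queries S rk k) \<le> real k * real (b - 1)"
      by (metis of_nat_le_iff of_nat_mult)
    also have "\<dots> \<le> real k * real n powr (1 / real k)"
      using bx by (simp add: mult_left_mono)
    finally show "real (num_queries S rk k) \<le> real k * real n powr (1 / real k)" .
  qed
  show ?thesis unfolding locate_alg_def using valid main by blast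
qed

end
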